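(* Let $A$ be a deterministic KAT automaton over $(\Sigma_0,T_0)$, let $\mathfrak{s}$ assign to each $p\in\Sigma_0$ a deterministic KAT automaton $\mathfrak{s}(p)$ over $(\Sigma_1,T_1)$, and let $\mathfrak{t}:T_0\to\mathsf{BA}(T_1)$. Then $L(\mathsf{compose}^{\mathfrak{s}}_{\mathfrak{t}}(A))=\mathrm{apply}^{\mathfrak{s}'}_{\mathfrak{t}}(L(A))$, where $\mathfrak{s}'(p)=L(\mathfrak{s}(p))$.
   Context: Atoms $\mathsf{At}_T=2^T$; $\mathsf{BA}(T)$ Boolean expressions over $T$; $\alpha\le b$ means $b$ holds under the assignment making exactly the tests in $\alpha$ true. Guarded strings: words in $\mathsf{At}_T(\Sigma\mathsf{At}_T)^*$; $w'\alpha\diamond\alpha x'=w'\alpha x'$. Deterministic KAT automaton over $(\Sigma,T)$: $A=(Q,\delta,\iota)$, $Q$ finite, $\delta:Q\times\mathsf{At}_T\to\{\mathsf{accept},\mathsf{reject}\}+\Sigma\times Q$, $\iota:\mathsf{At}_T\to\{\mathsf{accept},\mathsf{reject}\}+\Sigma\times Q$. $L_A(\gamma)$ is the smallest set with $\gamma(\alpha)=\mathsf{accept}\Rightarrow\alpha\in L_A(\gamma)$ and $\gamma(\alpha)=(p,q)$, $w\in L_A(\delta(q,-))\Rightarrow\alpha pw\in L_A(\gamma)$; $L(A)=L_A(\iota)$. Language substitution: $\beta\in\mathsf{At}_{T_1}$ is $\mathfrak{t}$-consistent with $\alpha\in\mathsf{At}_{T_0}$ if $\alpha\le t\iff\beta\le\mathfrak{t}(t)$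 for all $t\in T_0$; $\mathrm{apply}_{\mathfrak{t}}(L)=\{\beta_0p_0\cdots p_{n-1}\beta_n:\exists\alpha_0p_0\cdots p_{n-1}\alpha_n\in L$ with each $\beta_i$ $\mathfrak{t}$-consistent with $\alpha_i\}$; for $L$ over $(\Sigma_0,T_1)$ and $\mathfrak{s}'$ mapping $\Sigma_0$ to guarded languages over $(\Sigma_1,T_1)$, $\mathrm{apply}^{\mathfrak{s}'}(L)=\{\alpha_0\diamond w_0\diamond\alpha_1\diamond\cdots\diamond w_{n-1}\diamond\alpha_n:\alpha_0p_0\cdots p_{n-1}\alpha_n\in L,\ w_i\in\mathfrak{s}'(p_i)\}$; $\mathrm{apply}^{\mathfrak{s}'}_{\mathfrak{t}}=\mathrm{apply}^{\mathfrak{s}'}\circ\mathrm{apply}_{\mathfrak{t}}$. Automata composition. (1) $\mathsf{compose}_{\mathfrak{t}}(A)$ for $A=(Q,\delta,\iota)$ over $(\Sigma,T_0)$: with $\mathfrak{t}^{-1}(\beta)\in\mathsf{At}_{T_0}$ the atom such that $t\in\mathfrak{t}^{-1}(\beta)$ iff $\beta\le\mathfrak{t}(t)$, it is $(Q,\delta',\iota')$ over $(\Sigma,T_1)$ with $\delta'(q,\beta)=\delta(q,\mathfrak{t}^{-1}(\beta))$, $\iota'(\beta)=\iota(\mathfrak{t}^{-1}(\beta))$. (2) For $A=(Q,\delta,\iota)$ over $(\Sigma_0,T)$ and $\mathfrak{s}(p)=(Q_p,\delta_p,\iota_p)$ over $(\Sigma_1,T)$: $\hat\delta(q,\alpha)=\mathsf{accept}$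 if $\delta(q,\alpha)=\mathsf{accept}$; $=(p,q')$ if $\delta(q,\alpha)=(p,q')$ and $\iota_p(\alpha)\ne\mathsf{accept}$; $=\hat\delta(q',\alpha)$ if $\delta(q,\alpha)=(p,q')$ and $\iota_p(\alpha)=\mathsf{accept}$; $=\mathsf{reject}$ otherwise (including when the recursion does not terminate). $\hat\iota(\alpha)=\hat\delta(q,\alpha)$ if $\iota(\alpha)=(p,q)$ and $\iota_p(\alpha)=\mathsf{accept}$, else $\iota(\alpha)$. $\mathsf{compose}^{\mathfrak{s}}(A)=(Q',\delta',\iota')$ over $(\Sigma_1,T)$ with $Q'=\sum_{p\in\Sigma_0}Q_p\times Q$ and, for $q_p\in Q_p$, $q\in Q$: $\delta'((q_p,q),\alpha)=(p'',(q_p',q))$ if $\delta_p(q_p,\alpha)=(p'',q_p')$; $=(p'',(q_{p'},q'))$ if $\delta_p(q_p,\alpha)=\mathsf{accept}$, $\hat\delta(q,\alpha)=(p',q')$ and $\iota_{p'}(\alpha)=(p'',q_{p'})$; $=\mathsf{accept}$ if $\delta_p(q_p,\alpha)=\mathsf{accept}$ and $\hat\delta(q,\alpha)=\mathsf{accept}$; $=\mathsf{reject}$ otherwise; $\iota'(\alpha)=\mathsf{accept}$ if $\hat\iota(\alpha)=\mathsf{accept}$; $=(p'',(q_{p'},q))$ if $\hat\iota(\alpha)=(p',q)$ and $\iota_{p'}(\alpha)=(p'',q_{p'})$; $=\mathsf{reject}$ otherwise. (3) $\mathsf{compose}^{\mathfrak{s}}_{\mathfrak{t}}(A)=\mathsf{compose}^{\mathfrak{s}}(\mathsf{compose}_{\mathfrak{t}}(A))$.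 *)

theory Defs
  imports Main
begin

datatype 't bexp = BTrue | BFalse | BTest 't | BNot "'t bexp"
  | BAnd "'t bexp" "'t bexp" | BOr "'t bexp" "'t bexp"

text \<open>An atom over T is a subset of T (the tests assigned true); the test type is finite.
  atom_le a b means that b holds under the assignment a.\<close>
fun atom_le :: "'t set \<Rightarrow> 't bexp \<Rightarrow> bool" where
  "atom_le a BTrue = True"
| "atom_le a BFalse = False"
| "atom_le a (BTest t) = (t \<in> a)"
| "atom_le a (BNot b) = (\<not> atom_le a b)"
| "atom_le a (BAnd b c) = (atom_le a b \<and> atom_le a c)"
| "atom_le a (BOr b c) = (atom_le a b \<or> atom_le a c)"

text \<open>Guarded string alpha_0 p_0 alpha_1 ... p_(n-1) alpha_n, represented as
  (alpha_0, [(p_0, alpha_1), ..., (p_(n-1), alpha_n)]).\<close>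
type_synonym ('p, 't) gstring = "'t set \<times> ('p \<times> 't set) list"

definition last_atom :: "('p, 't) gstring \<Rightarrow> 't set" where
  "last_atom w = (if snd w = [] then fst w else snd (last (snd w)))"

definition gs_diamond :: "('p, 't) gstring \<Rightarrow> ('p, 't) gstring \<Rightarrow> ('p, 't) gstring option" where
  "gs_diamond w v = (if last_atom w = fst v then Some (fst w, snd w @ snd v) else None)"

datatype ('p, 'q) res = Accept | Reject | Step 'p 'q

text \<open>A deterministic KAT automaton with (finite) state type 'q: the pair (delta, iota).\<close>
type_synonym ('q, 'p, 't) kat_aut =
  "('q \<Rightarrow> 't set \<Rightarrow> ('p, 'q) res) \<times> ('t set \<Rightarrow> ('p, 'q) res)"

inductive lang_from :: "('q \<Rightarrow> 't set \<Rightarrow> ('p, 'q) res) \<Rightarrow> ('t set \<Rightarrow> ('p, 'q) res)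
    \<Rightarrow> ('p, 't) gstring \<Rightarrow> bool" for \<delta> where
  acc: "\<gamma> \<alpha> = Accept \<Longrightarrow> lang_from \<delta> \<gamma> (\<alpha>, [])"
| step: "\<gamma> \<alpha> = Step p q \<Longrightarrow> lang_from \<delta> (\<delta> q) w
          \<Longrightarrow> lang_from \<delta> \<gamma> (\<alpha>, (p, fst w) # snd w)"

definition kat_lang :: "('q, 'p, 't) kat_aut \<Rightarrow> ('p, 't) gstring set" where
  "kat_lang A = {w. lang_from (fst A) (snd A) w}"

definition t_consistent :: "('t0 \<Rightarrow> 't1 bexp) \<Rightarrow> 't1 set \<Rightarrow> 't0 set \<Rightarrow> bool" where
  "t_consistent tt \<beta> \<alpha> = (\<forall>t. t \<in> \<alpha> \<longleftrightarrow> atom_le \<beta> (tt t))"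

definition apply_t :: "('t0 \<Rightarrow> 't1 bexp) \<Rightarrow> ('p, 't0) gstring set \<Rightarrow> ('p, 't1) gstring set" where
  "apply_t tt L = {(\<beta>0, ys). \<exists>\<alpha>0 xs. (\<alpha>0, xs) \<in> L \<and> t_consistent tt \<beta>0 \<alpha>0 \<and>
      list_all2 (\<lambda>(p, \<beta>) (p', \<alpha>). p = p' \<and> t_consistent tt \<beta> \<alpha>) ys xs}"

text \<open>subst_rel s' x v: v = alpha_0 <> w_0 <> alpha_1 <> ... <> w_(n-1) <> alpha_n for some
  choice of w_i in s'(p_i), where x = alpha_0 p_0 ... p_(n-1) alpha_n (all products defined).\<close>
inductive subst_rel :: "('p0 \<Rightarrow> ('p1, 't) gstring set) \<Rightarrow> ('p0, 't) gstring
    \<Rightarrow> ('p1, 't) gstring \<Rightarrow> bool" for s' where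
  nil: "subst_rel s' (\<alpha>, []) (\<alpha>, [])"
| cons: "w \<in> s' p \<Longrightarrow> gs_diamond (\<alpha>, []) w = Some w \<Longrightarrow>
         subst_rel s' (\<beta>, xs) v \<Longrightarrow> gs_diamond w v = Some u \<Longrightarrow>
         subst_rel s' (\<alpha>, (p, \<beta>) # xs) u"

definition apply_s :: "('p0 \<Rightarrow> ('p1, 't) gstring set) \<Rightarrow> ('p0, 't) gstring set
    \<Rightarrow> ('p1, 't) gstring set" where
  "apply_s s' L = {v. \<exists>x \<in> L. subst_rel s' x v}"

definition apply_st :: "('p0 \<Rightarrow> ('p1, 't1) gstring set) \<Rightarrow> ('t0 \<Rightarrow> 't1 bexp)
    \<Rightarrow> ('p0, 't0) gstring set \<Rightarrow> ('p1, 't1) gstring set" where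
  "apply_st s' tt L = apply_s s' (apply_t tt L)"

definition t_inv :: "('t0 \<Rightarrow> 't1 bexp) \<Rightarrow> 't1 set \<Rightarrow> 't0 set" where
  "t_inv tt \<beta> = {t. atom_le \<beta> (tt t)}"

definition compose_t :: "('t0 \<Rightarrow> 't1 bexp) \<Rightarrow> ('q, 'p, 't0) kat_aut \<Rightarrow> ('q, 'p, 't1) kat_aut" where
  "compose_t tt A = ((\<lambda>q \<beta>. fst A q (t_inv tt \<beta>)), (\<lambda>\<beta>. snd A (t_inv tt \<beta>)))"

text \<open>The relation underlying delta-hat (least relation; where no result is derivable,
  in particular on non-terminating recursion, delta-hat is reject).\<close>
inductive hat_rel :: "('p0 \<Rightarrow> ('q1, 'p1, 't) kat_aut) \<Rightarrow> ('q0 \<Rightarrow> 't set \<Rightarrow> ('p0, 'q0) res)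
    \<Rightarrow> 'q0 \<Rightarrow> 't set \<Rightarrow> ('p0, 'q0) res \<Rightarrow> bool" for s \<delta> where
  acc: "\<delta> q \<alpha> = Accept \<Longrightarrow> hat_rel s \<delta> q \<alpha> Accept"
| stop: "\<delta> q \<alpha> = Step p q' \<Longrightarrow> snd (s p) \<alpha> \<noteq> Accept \<Longrightarrow> hat_rel s \<delta> q \<alpha> (Step p q')"
| skip: "\<delta> q \<alpha> = Step p q' \<Longrightarrow> snd (s p) \<alpha> = Accept \<Longrightarrow> hat_rel s \<delta> q' \<alpha> r
          \<Longrightarrow> hat_rel s \<delta> q \<alpha> r"

definition delta_hat :: "('p0 \<Rightarrow> ('q1, 'p1, 't) kat_aut) \<Rightarrow> ('q0 \<Rightarrow> 't set \<Rightarrow> ('p0, 'q0) res)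
    \<Rightarrow> 'q0 \<Rightarrow> 't set \<Rightarrow> ('p0, 'q0) res" where
  "delta_hat s \<delta> q \<alpha> = (if \<exists>r. hat_rel s \<delta> q \<alpha> r then (THE r. hat_rel s \<delta> q \<alpha> r) else Reject)"

definition iota_hat :: "('p0 \<Rightarrow> ('q1, 'p1, 't) kat_aut) \<Rightarrow> ('q0, 'p0, 't) kat_aut
    \<Rightarrow> 't set \<Rightarrow> ('p0, 'q0) res" where
  "iota_hat s A \<alpha> = (case snd A \<alpha> of
       Step p q \<Rightarrow> (if snd (s p) \<alpha> = Accept then delta_hat s (fst A) q \<alpha> else snd A \<alpha>)
     | _ \<Rightarrow> snd A \<alpha>)"

text \<open>States of compose^s(A): the sum over p of Q_p x Q, represented as tagged triples
  (p, q_p, q); all s(p) share the (finite) state type 'q1.\<close>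
definition compose_s :: "('p0 \<Rightarrow> ('q1, 'p1, 't) kat_aut) \<Rightarrow> ('q0, 'p0, 't) kat_aut
    \<Rightarrow> ('p0 \<times> 'q1 \<times> 'q0, 'p1, 't) kat_aut" where
  "compose_s s A =
    ((\<lambda>(p, qp, q) \<alpha>. (case fst (s p) qp \<alpha> of
         Step p'' qp' \<Rightarrow> Step p'' (p, qp', q)
       | Accept \<Rightarrow> (case delta_hat s (fst A) q \<alpha> of
             Step p' q' \<Rightarrow> (case snd (s p') \<alpha> of
                 Step p'' qp'' \<Rightarrow> Step p'' (p', qp'', q')
               | _ \<Rightarrow> Reject)
           | Accept \<Rightarrow> Accept
           | Reject \<Rightarrow> Reject)
       | Reject \<Rightarrow> Reject)),
     (\<lambda>\<alpha>. (case iota_hat s A \<alpha> of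
         Accept \<Rightarrow> Accept
       | Step p' q \<Rightarrow> (case snd (s p') \<alpha> of
             Step p'' qp \<Rightarrow> Step p'' (p', qp, q)
           | _ \<Rightarrow> Reject)
       | Reject \<Rightarrow> Reject)))"

definition compose_st :: "('p0 \<Rightarrow> ('q1, 'p1, 't1) kat_aut) \<Rightarrow> ('t0 \<Rightarrow> 't1 bexp)
    \<Rightarrow> ('q0, 'p0, 't0) kat_aut \<Rightarrow> ('p0 \<times> 'q1 \<times> 'q0, 'p1, 't1) kat_aut" where
  "compose_st s tt A = compose_s s (compose_t tt A)"

end

theory Submission
  imports Defs
begin

lemma lang_from_cong:
  assumes "lang_from \<delta> \<gamma> x" "\<gamma> (fst x) = \<gamma>' (fst x)"
  shows "lang_from \<delta> \<gamma>' x"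
  using assms
proof (cases rule: lang_from.cases)
  case (acc \<alpha>)
  then show ?thesis using assms(2) by (metis fst_conv lang_from.acc)
next
  case (step \<alpha> p q w)
  then show ?thesis using assms(2) by (metis fst_conv lang_from.step)
qed

lemma lang_from_cong_iff:
  "\<gamma> (fst x) = \<gamma>' (fst x) \<Longrightarrow> lang_from \<delta> \<gamma> x = lang_from \<delta> \<gamma>' x"
  using lang_from_cong by metis

section \<open>Part 1: test substitution\<close>

definition tmap :: "('t0 \<Rightarrow> 't1 bexp) \<Rightarrow> ('p, 't1) gstring \<Rightarrow> ('p, 't0) gstring" where
  "tmap tt x = (t_inv tt (fst x), map (\<lambda>(p, b). (p, t_inv tt b)) (snd x))"

lemma ct_dir1:
  assumes "lang_from (\<lambda>q \<beta>. \<delta> q (t_inv tt \<beta>)) G x"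
  shows "(\<forall>\<beta>. G \<beta> = \<gamma> (t_inv tt \<beta>)) \<Longrightarrow> lang_from \<delta> \<gamma> (tmap tt x)"
  using assms
proof (induction arbitrary: \<gamma> rule: lang_from.induct)
  case (acc \<gamma>' \<alpha>)
  then show ?case by (auto simp: tmap_def intro: lang_from.acc)
next
  case (step \<gamma>' \<alpha> p q w)
  have "lang_from \<delta> (\<delta> q) (tmap tt w)" using step by auto
  moreover have "\<gamma> (t_inv tt \<alpha>) = Step p q" using step by metis
  ultimately show ?case
    using lang_from.step[of \<gamma> "t_inv tt \<alpha>" p q \<delta> "tmap tt w"]
    by (auto simp: tmap_def)
qed

lemma ct_dir2:
  assumes "lang_from \<delta> \<gamma> y"
  shows "y = tmap tt x \<Longrightarrow> lang_from (\<lambda>q \<beta>. \<delta> q (t_inv tt \<beta>)) (\<lambda>\<beta>. \<gamma> (t_inv tt \<beta>)) x"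
  using assms
proof (induction arbitrary: x rule: lang_from.induct)
  case (acc \<gamma> \<alpha>)
  then show ?case by (cases x) (auto simp: tmap_def intro: lang_from.acc)
next
  case (step \<gamma> \<alpha> p q w)
  obtain \<beta> ys where x: "x = (\<beta>, ys)" by (cases x)
  then obtain p' b ys' where ys: "ys = (p', b) # ys'" using step.prems
    by (cases ys) (auto simp: tmap_def)
  have e: "t_inv tt \<beta> = \<alpha>" "p' = p" "w = tmap tt (b, ys')"
    using step.prems x ys by (auto simp: tmap_def prod_eq_iff)
  have "lang_from (\<lambda>q \<beta>. \<delta> q (t_inv tt \<beta>)) (\<lambda>\<beta>. \<delta> q (t_inv tt \<beta>)) (b, ys')"
    using step.IH e by auto
  then show ?case using x ys e step.hyps(1)
    using lang_from.step[of "\<lambda>\<beta>. \<gamma> (t_inv tt \<beta>)" \<beta> p q "\<lambda>q \<beta>. \<delta> q (t_inv tt \<beta>)" "(b, ys')"]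
    by auto
qed

lemma t_consistent_iff: "t_consistent tt \<beta> \<alpha> \<longleftrightarrow> \<alpha> = t_inv tt \<beta>"
  by (auto simp: t_consistent_def t_inv_def)

lemma list_all2_tinv:
  "list_all2 (\<lambda>(p, \<beta>) (p', \<alpha>). p = p' \<and> \<alpha> = t_inv tt \<beta>) ys xs
   \<longleftrightarrow> xs = map (\<lambda>(p, b). (p, t_inv tt b)) ys"
proof (induction ys arbitrary: xs)
  case Nil
  then show ?case by auto
next
  case (Cons a ys)
  then show ?case
    by (cases xs) (auto split: prod.splits)
qed

lemma apply_t_eq: "apply_t tt L = {x. tmap tt x \<in> L}"
  unfolding apply_t_def
  by (auto simp: t_consistent_iff list_all2_tinv tmap_def)

lemma lang_compose_t: "kat_lang (compose_t tt A) = apply_t tt (kat_lang A)"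
proof -
  have "lang_from (\<lambda>q \<beta>. fst A q (t_inv tt \<beta>)) (\<lambda>\<beta>. snd A (t_inv tt \<beta>)) x
        \<longleftrightarrow> lang_from (fst A) (snd A) (tmap tt x)" for x
    using ct_dir1[of "fst A" tt "\<lambda>\<beta>. snd A (t_inv tt \<beta>)" x "snd A"]
      ct_dir2[of "fst A" "snd A" "tmap tt x" tt x] by auto
  then show ?thesis
    by (auto simp: kat_lang_def compose_t_def apply_t_eq)
qed

section \<open>Part 2: action substitution\<close>

definition hatg where
  "hatg s \<delta> \<gamma> \<alpha> = (case \<gamma> \<alpha> of
       Step p q \<Rightarrow> (if snd (s p) \<alpha> = Accept then delta_hat s \<delta> q \<alpha> else \<gamma> \<alpha>)
     | _ \<Rightarrow> \<gamma> \<alpha>)"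

definition Ent where
  "Ent s \<delta> \<gamma> \<alpha> = (case hatg s \<delta> \<gamma> \<alpha> of
         Accept \<Rightarrow> Accept
       | Step p' q \<Rightarrow> (case snd (s p') \<alpha> of
             Step p'' qp \<Rightarrow> Step p'' (p', qp, q)
           | _ \<Rightarrow> Reject)
       | Reject \<Rightarrow> Reject)"

definition Mid where
  "Mid s \<delta> p \<gamma>p q \<alpha> = (case \<gamma>p \<alpha> of
         Step p'' qp' \<Rightarrow> Step p'' (p, qp', q)
       | Accept \<Rightarrow> Ent s \<delta> (\<delta> q) \<alpha>
       | Reject \<Rightarrow> Reject)"

definition SL where
  "SL s \<delta> \<gamma> v = (\<exists>x. lang_from \<delta> \<gamma> x \<and> subst_rel (\<lambda>p. kat_lang (s p)) x v)"

lemma hat_rel_det: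
  "hat_rel s \<delta> q \<alpha> r1 \<Longrightarrow> hat_rel s \<delta> q \<alpha> r2 \<Longrightarrow> r1 = r2"
proof (induction arbitrary: r2 rule: hat_rel.induct)
  case (acc q \<alpha>)
  from acc.prems show ?case by (cases rule: hat_rel.cases) (simp_all add: acc.hyps)
next
  case (stop q \<alpha> p q')
  from stop.prems show ?case by (cases rule: hat_rel.cases) (simp_all add: stop.hyps)
next
  case (skip q \<alpha> p q' r)
  from skip.prems show ?case
  proof (cases rule: hat_rel.cases)
    case acc
    then show ?thesis using skip.hyps by simp
  next
    case (stop p2 q2)
    then show ?thesis using skip.hyps by simp
  next
    case (skip p2 q2)
    then have "q2 = q'" using skip.hyps(1) by simp
    then show ?thesis using skip.IH skip by blast
  qed
qed

lemma delta_hat_rel: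
  assumes "delta_hat s \<delta> q \<alpha> \<noteq> Reject"
  shows "hat_rel s \<delta> q \<alpha> (delta_hat s \<delta> q \<alpha>)"
proof -
  obtain r where r: "hat_rel s \<delta> q \<alpha> r" using assms unfolding delta_hat_def by (auto split: if_splits)
  then have "(THE r. hat_rel s \<delta> q \<alpha> r) = r" by (metis hat_rel_det the_equality)
  then show ?thesis using r unfolding delta_hat_def by auto
qed

lemma delta_hat_eq: "delta_hat s \<delta> q \<alpha> = hatg s \<delta> (\<delta> q) \<alpha>"
proof (cases "\<delta> q \<alpha>")
  case Accept
  then have "hat_rel s \<delta> q \<alpha> Accept" by (rule hat_rel.acc)
  then show ?thesis using Accept hat_rel_det[of s \<delta> q \<alpha> Accept]
    by (auto simp: delta_hat_def hatg_def)
next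
  case Reject
  have "\<not> hat_rel s \<delta> q \<alpha> r" for r
  proof
    assume "hat_rel s \<delta> q \<alpha> r"
    then show False using Reject by (cases rule: hat_rel.cases) simp_all
  qed
  then show ?thesis using Reject by (auto simp: delta_hat_def hatg_def)
next
  case (Step p q')
  show ?thesis
  proof (cases "snd (s p) \<alpha> = Accept")
    case True
    have "hat_rel s \<delta> q \<alpha> r \<longleftrightarrow> hat_rel s \<delta> q' \<alpha> r" for r
    proof
      assume "hat_rel s \<delta> q \<alpha> r"
      then show "hat_rel s \<delta> q' \<alpha> r"
        using Step True by (cases rule: hat_rel.cases) simp_all
    next
      assume "hat_rel s \<delta> q' \<alpha> r"
      then show "hat_rel s \<delta> q \<alpha> r"
        using hat_rel.skip[where s=s and \<delta>=\<delta> and q=q and \<alpha>=\<alpha> and p=p and q'=q', OF Step True] by blast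
    qed
    then have "hat_rel s \<delta> q \<alpha> = hat_rel s \<delta> q' \<alpha>" by (intro ext) blast
    then show ?thesis using Step True by (simp add: delta_hat_def hatg_def)
  next
    case False
    then have "hat_rel s \<delta> q \<alpha> (Step p q')" using hat_rel.stop[where s=s and \<delta>=\<delta> and q=q and \<alpha>=\<alpha> and p=p and q'=q', OF Step] by blast
    then have "(THE r. hat_rel s \<delta> q \<alpha> r) = Step p q'"
      by (metis hat_rel_det the_equality)
    then have "delta_hat s \<delta> q \<alpha> = Step p q'"
      using \<open>hat_rel s \<delta> q \<alpha> (Step p q')\<close> unfolding delta_hat_def by auto
    then show ?thesis using Step False by (simp add: hatg_def)
  qed
qed

lemma compose_s_fst:
  "fst (compose_s s A) (p, qp, q) \<alpha> = Mid s (fst A) p (fst (s p) qp) q \<alpha>"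
  by (simp add: compose_s_def Mid_def Ent_def delta_hat_eq split: res.splits)

lemma compose_s_snd:
  "snd (compose_s s A) = Ent s (fst A) (snd A)"
  by (rule ext) (simp add: compose_s_def Ent_def hatg_def iota_hat_def)

lemma subst_rel_fst: "subst_rel s' x v \<Longrightarrow> fst v = fst x"
  by (induction rule: subst_rel.induct)
     (auto simp: gs_diamond_def last_atom_def split: if_splits)

lemma SL_cong: "\<gamma> (fst v) = \<gamma>' (fst v) \<Longrightarrow> SL s \<delta> \<gamma> v = SL s \<delta> \<gamma>' v"
  unfolding SL_def using lang_from_cong_iff subst_rel_fst by metis

lemma diamond_cons:
  "gs_diamond w v = Some u \<Longrightarrow>
   gs_diamond (\<alpha>, (p, fst w) # snd w) v = Some (\<alpha>, (p, fst u) # snd u)"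
  by (auto simp: gs_diamond_def last_atom_def split: if_splits)

lemma diamond_nil: "gs_diamond (\<alpha>, []) v = Some u \<longleftrightarrow> fst v = \<alpha> \<and> u = v"
  by (cases v) (auto simp: gs_diamond_def last_atom_def)

lemma SLcons:
  assumes "\<gamma> \<alpha> = Step p q" "w \<in> kat_lang (s p)" "fst w = \<alpha>" "SL s \<delta> (\<delta> q) v'"
    "gs_diamond w v' = Some v"
  shows "SL s \<delta> \<gamma> v"
proof -
  obtain x' where x': "lang_from \<delta> (\<delta> q) x'" "subst_rel (\<lambda>p. kat_lang (s p)) x' v'"
    using assms(4) by (auto simp: SL_def)
  have "lang_from \<delta> \<gamma> (\<alpha>, (p, fst x') # snd x')"
    using assms(1) x'(1) by (rule lang_from.step)
  moreover have "subst_rel (\<lambda>p. kat_lang (s p)) (\<alpha>, (p, fst x') # snd x') v"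
    apply (rule subst_rel.cons[where w=w and v=v' and u=v])
    using assms x' by (auto simp: diamond_nil)
  ultimately show ?thesis by (auto simp: SL_def)
qed

lemma SLstep:
  assumes "\<gamma> \<alpha> = Step p q" "snd (s p) \<alpha> = Accept" "SL s \<delta> (\<delta> q) v" "fst v = \<alpha>"
  shows "SL s \<delta> \<gamma> v"
proof -
  have "(\<alpha>, []) \<in> kat_lang (s p)" using assms(2)
    by (auto simp: kat_lang_def intro: lang_from.acc)
  then show ?thesis using SLcons[where \<gamma>=\<gamma> and \<alpha>=\<alpha> and p=p and q=q and w="(\<alpha>, [])"
      and s=s and \<delta>=\<delta> and v'=v and v=v] assms
    by (auto simp: diamond_nil)
qed

lemma Hat:
  "hat_rel s \<delta> q \<alpha> r \<Longrightarrow> SL s \<delta> (\<lambda>_. r) v \<Longrightarrow> fst v = \<alpha> \<Longrightarrow> SL s \<delta> (\<delta> q) v"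
proof (induction rule: hat_rel.induct)
  case (acc q \<alpha>)
  then show ?case using SL_cong[of "\<lambda>_. Accept" v "\<delta> q"] by auto
next
  case (stop q \<alpha> p q')
  then show ?case using SL_cong[of "\<lambda>_. Step p q'" v "\<delta> q"] by auto
next
  case (skip q \<alpha> p q' r)
  then show ?case using SLstep[of "\<delta> q" \<alpha> p q' s \<delta> v] by auto
qed

lemma S1a:
  assumes "lang_from (fst (compose_s s A)) G v"
  shows "G (fst v) = Mid s (fst A) p \<gamma>p q (fst v) \<Longrightarrow>
    \<exists>w v'. lang_from (fst (s p)) \<gamma>p w \<and>
       lang_from (fst (compose_s s A)) (Ent s (fst A) (fst A q)) v' \<and> gs_diamond w v' = Some v"
  using assms
proof (induction arbitrary: \<gamma>p rule: lang_from.induct)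
  case (acc \<gamma> \<alpha>)
  then have "\<gamma>p \<alpha> = Accept" "Ent s (fst A) (fst A q) \<alpha> = Accept"
    by (auto simp: Mid_def split: res.splits)
  then show ?case
    by (rule_tac x="(\<alpha>, [])" in exI, rule_tac x="(\<alpha>, [])" in exI)
       (auto intro: lang_from.acc simp: gs_diamond_def last_atom_def)
next
  case (step \<gamma> \<alpha> p1 q1 w1)
  show ?case
  proof (cases "\<gamma>p \<alpha>")
    case Accept
    then have "Ent s (fst A) (fst A q) \<alpha> = Step p1 q1"
      using step.prems step.hyps by (auto simp: Mid_def)
    then have "lang_from (fst (compose_s s A)) (Ent s (fst A) (fst A q)) (\<alpha>, (p1, fst w1) # snd w1)"
      using step.hyps(2) by (rule lang_from.step)
    then show ?thesis using Accept
      by (rule_tac x="(\<alpha>, [])" in exI, rule_tac x="(\<alpha>, (p1, fst w1) # snd w1)" in exI)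
         (auto intro: lang_from.acc simp: diamond_nil)
  next
    case Reject
    then show ?thesis using step.prems step.hyps by (auto simp: Mid_def)
  next
    case (Step p2 qp')
    then have e: "p1 = p2" "q1 = (p, qp', q)" using step.prems step.hyps by (auto simp: Mid_def)
    have "fst (compose_s s A) q1 (fst w1) = Mid s (fst A) p (fst (s p) qp') q (fst w1)"
      using e compose_s_fst by metis
    then obtain w'' v'' where h: "lang_from (fst (s p)) (fst (s p) qp') w''"
      "lang_from (fst (compose_s s A)) (Ent s (fst A) (fst A q)) v''" "gs_diamond w'' v'' = Some w1"
      using step.IH by blast
    have "lang_from (fst (s p)) \<gamma>p (\<alpha>, (p1, fst w'') # snd w'')"
      using Step e h(1) by (auto intro: lang_from.step)
    moreover have "gs_diamond (\<alpha>, (p1, fst w'') # snd w'') v'' = Some (\<alpha>, (p1, fst w1) # snd w1)"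
      using diamond_cons[OF h(3)] .
    ultimately show ?thesis using h(2) by blast
  qed
qed

lemma S1b:
  assumes "lang_from (fst (s p)) \<gamma>p w"
  shows "lang_from (fst (compose_s s A)) (Ent s (fst A) (fst A q)) v' \<Longrightarrow> gs_diamond w v' = Some v
    \<Longrightarrow> lang_from (fst (compose_s s A)) (Mid s (fst A) p \<gamma>p q) v"
  using assms
proof (induction arbitrary: v rule: lang_from.induct)
  case (acc \<gamma> \<alpha>)
  then have "v = v'" "fst v' = \<alpha>" by (auto simp: diamond_nil)
  moreover have "Mid s (fst A) p \<gamma> q \<alpha> = Ent s (fst A) (fst A q) \<alpha>"
    using acc.hyps by (simp add: Mid_def)
  ultimately show ?case using acc.prems(1) lang_from_cong by metis
next
  case (step \<gamma> \<alpha> p1 qp1 w1)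
  obtain u where u: "gs_diamond w1 v' = Some u" "v = (\<alpha>, (p1, fst u) # snd u)"
    using step.prems(2) by (auto simp: gs_diamond_def last_atom_def split: if_splits)
  have "lang_from (fst (compose_s s A)) (Mid s (fst A) p (fst (s p) qp1) q) u"
    using step.IH step.prems u by auto
  then have "lang_from (fst (compose_s s A)) (fst (compose_s s A) (p, qp1, q)) u"
    using compose_s_fst[of s A p qp1 q] by (metis ext)
  moreover have "Mid s (fst A) p \<gamma> q \<alpha> = Step p1 (p, qp1, q)" using step.hyps by (simp add: Mid_def)
  ultimately show ?case using u(2) by (auto intro: lang_from.step)
qed

lemma S2a:
  "SL s (fst A) \<gamma> v \<Longrightarrow> lang_from (fst (compose_s s A)) (Ent s (fst A) \<gamma>) v"
proof -
  assume "SL s (fst A) \<gamma> v"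
  then obtain x where x: "lang_from (fst A) \<gamma> x" "subst_rel (\<lambda>p. kat_lang (s p)) x v"
    by (auto simp: SL_def)
  from x show ?thesis
  proof (induction arbitrary: v rule: lang_from.induct)
    case (acc \<gamma> \<alpha>)
    then have "v = (\<alpha>, [])" by (auto elim: subst_rel.cases)
    moreover have "Ent s (fst A) \<gamma> \<alpha> = Accept" using acc by (simp add: Ent_def hatg_def)
    ultimately show ?case by (auto intro: lang_from.acc)
  next
    case (step \<gamma> \<alpha> p q x')
    from step.prems obtain w v' where h: "w \<in> kat_lang (s p)" "gs_diamond (\<alpha>, []) w = Some w"
      "subst_rel (\<lambda>p. kat_lang (s p)) x' v'" "gs_diamond w v' = Some v"
      by (cases rule: subst_rel.cases) auto
    have fw: "fst w = \<alpha>" using h(2) by (auto simp: diamond_nil)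
    have IH: "lang_from (fst (compose_s s A)) (Ent s (fst A) (fst A q)) v'"
      using step.IH h(3) by auto
    have lw: "lang_from (fst (s p)) (snd (s p)) w" using h(1) by (simp add: kat_lang_def)
    show ?case
    proof (cases "snd (s p) \<alpha> = Accept")
      case True
      have "w = (\<alpha>, [])" using lw True fw by (cases rule: lang_from.cases) auto
      then have vv: "v = v'" "fst v = \<alpha>" using h(4) by (auto simp: diamond_nil)
      have "Ent s (fst A) \<gamma> \<alpha> = Ent s (fst A) (fst A q) \<alpha>"
        using step.hyps True by (simp add: Ent_def hatg_def delta_hat_eq)
      then show ?thesis using IH vv lang_from_cong by metis
    next
      case False
      have "snd (s p) \<alpha> \<noteq> Reject" using lw fw by (cases rule: lang_from.cases) auto
      then obtain p'' qp where ip: "snd (s p) \<alpha> = Step p'' qp" using False by (cases "snd (s p) \<alpha>") auto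
      have "Ent s (fst A) \<gamma> \<alpha> = Mid s (fst A) p (snd (s p)) q \<alpha>"
        using step.hyps False ip by (simp add: Ent_def hatg_def Mid_def)
      moreover have "fst v = \<alpha>" using h(4) fw by (auto simp: gs_diamond_def split: if_splits)
      moreover have "lang_from (fst (compose_s s A)) (Mid s (fst A) p (snd (s p)) q) v"
        using S1b[OF lw IH h(4)] .
      ultimately show ?thesis using lang_from_cong by metis
    qed
  qed
qed

lemma S2b:
  "lang_from (fst (compose_s s A)) (Ent s (fst A) \<gamma>) v \<Longrightarrow> SL s (fst A) \<gamma> v"
proof (induction "length (snd v)" arbitrary: v \<gamma> rule: less_induct)
  case less
  obtain \<alpha> ys where v: "v = (\<alpha>, ys)" by (cases v)
  show ?case
  proof (cases "hatg s (fst A) \<gamma> \<alpha>")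
    case Accept
    then have E: "Ent s (fst A) \<gamma> \<alpha> = Accept" by (simp add: Ent_def)
    have ys: "ys = []" using less.prems v E by (cases rule: lang_from.cases) auto
    have base: "SL s (fst A) (\<lambda>_. Accept) (\<alpha>, [])"
      by (auto simp: SL_def intro!: exI[of _ "(\<alpha>, [])"] lang_from.acc subst_rel.nil)
    show ?thesis
    proof (cases "\<gamma> \<alpha>")
      case Accept
      then show ?thesis using base SL_cong[of \<gamma> "(\<alpha>, [])" "\<lambda>_. Accept"] v ys by auto
    next
      case Reject
      then show ?thesis using \<open>hatg s (fst A) \<gamma> \<alpha> = Accept\<close> by (simp add: hatg_def)
    next
      case (Step p q)
      then have c: "snd (s p) \<alpha> = Accept" "delta_hat s (fst A) q \<alpha> = Accept"
        using \<open>hatg s (fst A) \<gamma> \<alpha> = Accept\<close> by (auto simp: hatg_def split: if_splits)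
      then have "hat_rel s (fst A) q \<alpha> Accept"
        using delta_hat_rel[of s "fst A" q \<alpha>] by simp
      then have "SL s (fst A) (fst A q) (\<alpha>, [])" using Hat base by fastforce
      then show ?thesis using SLstep[where \<gamma>=\<gamma> and \<alpha>=\<alpha> and p=p and q=q and s=s and \<delta>="fst A" and v="(\<alpha>, [])"] Step c(1) v ys by auto
    qed
  next
    case Reject
    then have "Ent s (fst A) \<gamma> \<alpha> = Reject" by (simp add: Ent_def)
    with less.prems v show ?thesis by (cases rule: lang_from.cases) auto
  next
    case (Step p' q')
    have "snd (s p') \<alpha> \<noteq> Accept \<and> snd (s p') \<alpha> \<noteq> Reject"
    proof -
      have "Ent s (fst A) \<gamma> \<alpha> \<noteq> Reject"
        using less.prems v by (cases rule: lang_from.cases) auto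
      then show ?thesis using Step by (auto simp: Ent_def)
    qed
    then obtain p'' qp where ip: "snd (s p') \<alpha> = Step p'' qp" by (cases "snd (s p') \<alpha>") auto
    have "Ent s (fst A) \<gamma> \<alpha> = Mid s (fst A) p' (snd (s p')) q' \<alpha>"
      using Step ip by (simp add: Ent_def Mid_def)
    then obtain w v' where h: "lang_from (fst (s p')) (snd (s p')) w"
       "lang_from (fst (compose_s s A)) (Ent s (fst A) (fst A q')) v'" "gs_diamond w v' = Some v"
      using S1a[OF less.prems, of p' "snd (s p')" q'] v by auto
    have fw: "fst w = \<alpha>" using h(3) v by (auto simp: gs_diamond_def split: if_splits)
    have "snd w \<noteq> []" using h(1) fw ip by (cases rule: lang_from.cases) auto
    then have "length (snd v') < length (snd v)"
      using h(3) by (auto simp: gs_diamond_def split: if_splits)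
    then have IH: "SL s (fst A) (fst A q') v'" using less.hyps h(2) by blast
    have wl: "w \<in> kat_lang (s p')" using h(1) by (simp add: kat_lang_def)
    have base: "SL s (fst A) (\<lambda>_. Step p' q') v"
      using SLcons[of "\<lambda>_. Step p' q'" \<alpha> p' q' w s "fst A" v' v] wl fw IH h(3) by auto
    have fv: "fst v = \<alpha>" using v by simp
    show ?thesis
    proof (cases "\<gamma> \<alpha>")
      case Accept
      then show ?thesis using Step by (simp add: hatg_def)
    next
      case Reject
      then show ?thesis using Step by (simp add: hatg_def)
    next
      case (Step p q)
      show ?thesis
      proof (cases "snd (s p) \<alpha> = Accept")
        case False
        then have "\<gamma> \<alpha> = Step p' q'" using Step \<open>hatg s (fst A) \<gamma> \<alpha> = Step p' q'\<close>
          by (simp add: hatg_def)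
        then show ?thesis using base SL_cong[of \<gamma> v "\<lambda>_. Step p' q'"] fv by auto
      next
        case True
        then have "delta_hat s (fst A) q \<alpha> = Step p' q'"
          using Step \<open>hatg s (fst A) \<gamma> \<alpha> = Step p' q'\<close> by (simp add: hatg_def)
        then have "hat_rel s (fst A) q \<alpha> (Step p' q')"
          using delta_hat_rel[of s "fst A" q \<alpha>] by simp
        then have "SL s (fst A) (fst A q) v" using Hat base fv by fastforce
        then show ?thesis using SLstep[where \<gamma>=\<gamma> and \<alpha>=\<alpha> and p=p and q=q and s=s and \<delta>="fst A" and v=v] Step True fv by auto
      qed
    qed
  qed
qed

lemma lang_compose_s:
  "kat_lang (compose_s s A) = apply_s (\<lambda>p. kat_lang (s p)) (kat_lang A)"
proof -
  have "lang_from (fst (compose_s s A)) (snd (compose_s s A)) v \<longleftrightarrow> SL s (fst A) (snd A) v" for v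
    using S2a[of s A "snd A" v] S2b[of s A "snd A" v] compose_s_snd[of s A] by auto
  then show ?thesis by (auto simp: kat_lang_def apply_s_def SL_def)
qed

theorem proposition6p5:
  fixes A :: "('q0::finite, 'p0::finite, 't0::finite) kat_aut"
    and s :: "'p0 \<Rightarrow> ('q1::finite, 'p1::finite, 't1::finite) kat_aut"
    and tt :: "'t0 \<Rightarrow> 't1 bexp"
  shows "kat_lang (compose_st s tt A) = apply_st (\<lambda>p. kat_lang (s p)) tt (kat_lang A)"
  by (simp add: compose_st_def apply_st_def lang_compose_s lang_compose_t)

end
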